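(* Fix $\alpha\in(0,1)$ and $\nu,\tau\ge0$ with $\nu>0$ and $\nu+\tau<\alpha$. Let $\hat q=\hat q(y)$ be any quantity such that, for the true $P$, $$P\left\{\hat q\ge q^{(\alpha-\nu-\tau)}_{\Gamma_\nu(P)},\ y\in A_\nu(P)\right\}\ge1-\tau.$$ (For example, $\hat q=\sup_{P'\in B_\nu(y)}q^{(\alpha-\nu)}_{\Gamma_\nu(P')}$ satisfies this with $\tau=0$.) Then $$P\left\{\theta_\gamma\in\left(\hat\theta_\gamma\pm\hat q\,\hat\sigma_\gamma\right),\ \forall\gamma\in\widehat\Gamma(y)\right\}\ge1-\alpha.$$
   Context: Setting: a family $\mathcal P$ of distributions of $y$, targets $\{\theta_\gamma(P)\}_{\gamma\in\Gamma}$ (written $\theta_\gamma$), a selection rule $y\mapsto\widehat\Gamma(y)\subseteq\Gamma$. For each $\gamma$ there are an estimator $\hat\theta_\gamma$ and a standard error $\hat\sigma_\gamma\ge0$ (functions of $y$), and for every $\Gamma'\subseteq\Gamma$ and $\beta\in(0,1)$ a number $q^\beta_{\Gamma'}$ such that the intervals $(\hat\theta_\gamma\pm q^\beta_{\Gamma'}\hat\sigma_\gamma)$ are simultaneously valid: $P\{\theta_\gamma\in(\hat\theta_\gamma\pm q^\beta_{\Gamma'}\hat\sigma_\gamma)\ \forall\gamma\in\Gamma'\}\ge1-\beta$ for all $P\in\mathcal P$. $A_\nu(P)$ is a set with $P\{y\in A_\nu(P)\}\ge1-\nu$; $\Gamma_\nu(P)=\bigcup_{y'\in A_\nu(P)}\widehat\Gamma(y')$;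 $B_\nu(y)=\{P\in\mathcal P: y\in A_\nu(P)\}$. *)

theory Defs
  imports "HOL-Probability.Probability"
begin

definition Gamma_nu :: "('y \<Rightarrow> 'g set) \<Rightarrow> 'y set \<Rightarrow> 'g set" where
  "Gamma_nu Ghat A = (\<Union>y'\<in>A. Ghat y')"

definition in_pm :: "real \<Rightarrow> real \<Rightarrow> real \<Rightarrow> real \<Rightarrow> bool" where
  "in_pm t c q s \<longleftrightarrow> c - q * s < t \<and> t < c + q * s"

end

theory Submission
  imports Defs
begin

theorem proposition8:
  fixes Pfam :: "'y measure set" and P :: "'y measure"
    and theta :: "'g \<Rightarrow> 'y measure \<Rightarrow> real"
    and theta_hat sigma_hat :: "'g \<Rightarrow> 'y \<Rightarrow> real"
    and q :: "'g set \<Rightarrow> real \<Rightarrow> real"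
    and Ghat :: "'y \<Rightarrow> 'g set"
    and A :: "'y measure \<Rightarrow> 'y set"
    and qhat :: "'y \<Rightarrow> real"
    and \<alpha> \<nu> \<tau> :: real
  assumes fam: "\<forall>P'\<in>Pfam. prob_space P'"
    and P_in: "P \<in> Pfam"
    and sigma_nonneg: "\<forall>g y. 0 \<le> sigma_hat g y"
    and valid: "\<forall>P'\<in>Pfam. \<forall>G \<beta>. 0 < \<beta> \<and> \<beta> < 1 \<longrightarrow>
        measure P' {y \<in> space P'. \<forall>g\<in>G. in_pm (theta g P') (theta_hat g y) (q G \<beta>) (sigma_hat g y)}
          \<ge> 1 - \<beta>"
    and A_prob: "\<forall>P'\<in>Pfam. measure P' {y \<in> space P'. y \<in> A P'} \<ge> 1 - \<nu>"
    and alpha: "0 < \<alpha>" "\<alpha> < 1"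
    and nu: "0 < \<nu>" and tau: "0 \<le> \<tau>" and sum_lt: "\<nu> + \<tau> < \<alpha>"
    and qhat_prop: "measure P {y \<in> space P.
        qhat y \<ge> q (Gamma_nu Ghat (A P)) (\<alpha> - \<nu> - \<tau>) \<and> y \<in> A P} \<ge> 1 - \<tau>"
    and meas: "{y \<in> space P. \<forall>g\<in>Ghat y. in_pm (theta g P) (theta_hat g y) (qhat y) (sigma_hat g y)}
        \<in> sets P"
  shows "measure P {y \<in> space P. \<forall>g\<in>Ghat y.
      in_pm (theta g P) (theta_hat g y) (qhat y) (sigma_hat g y)} \<ge> 1 - \<alpha>"
proof -
  define \<beta> where "\<beta> = \<alpha> - \<nu> - \<tau>"
  define G where "G = Gamma_nu Ghat (A P)"
  have ps: "prob_space P" using fam P_in by blast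
  interpret prob_space P by (rule ps)
  have b: "0 < \<beta>" "\<beta> < 1" using alpha nu tau sum_lt unfolding \<beta>_def by auto
  define C where "C = {y \<in> space P. \<forall>g\<in>G. in_pm (theta g P) (theta_hat g y) (q G \<beta>) (sigma_hat g y)}"
  define Q where "Q = {y \<in> space P. qhat y \<ge> q G \<beta> \<and> y \<in> A P}"
  define T where "T = {y \<in> space P. \<forall>g\<in>Ghat y. in_pm (theta g P) (theta_hat g y) (qhat y) (sigma_hat g y)}"
  have mC: "measure P C \<ge> 1 - \<beta>" using valid P_in b unfolding C_def by blast
  have mQ: "measure P Q \<ge> 1 - \<tau>" using qhat_prop unfolding Q_def G_def \<beta>_def .
  have sC: "C \<in> sets P"
  proof (rule ccontr)
    assume "C \<notin> sets P" then have "measure P C = 0" by (rule measure_notin_sets)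
    with mC b show False by linarith
  qed
  have sQ: "Q \<in> sets P"
  proof (rule ccontr)
    assume "Q \<notin> sets P" then have "measure P Q = 0" by (rule measure_notin_sets)
    with mQ tau nu sum_lt alpha show False by linarith
  qed
  have sub: "C \<inter> Q \<subseteq> T"
  proof
    fix y assume y: "y \<in> C \<inter> Q"
    have "in_pm (theta g P) (theta_hat g y) (qhat y) (sigma_hat g y)" if g: "g \<in> Ghat y" for g
    proof -
      have "g \<in> G" using y g unfolding Q_def G_def Gamma_nu_def by auto
      then have i: "in_pm (theta g P) (theta_hat g y) (q G \<beta>) (sigma_hat g y)" using y unfolding C_def by auto
      have "q G \<beta> * sigma_hat g y \<le> qhat y * sigma_hat g y"
        using y sigma_nonneg unfolding Q_def by (auto intro: mult_right_mono)
      then show ?thesis using i unfolding in_pm_def by linarith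
    qed
    then show "y \<in> T" using y unfolding T_def C_def by auto
  qed
  have "measure P (C \<union> Q) + measure P (C \<inter> Q) = measure P C + measure P Q"
    using sC sQ measure_Un3[of C P Q] by (simp add: fmeasurable_def emeasure_eq_measure)
  moreover have "measure P (C \<union> Q) \<le> 1" by (rule prob_le_1)
  moreover have "measure P (C \<inter> Q) \<le> measure P T"
    using sub meas unfolding T_def by (intro finite_measure_mono) auto
  ultimately show ?thesis using mC mQ nu unfolding T_def \<beta>_def by linarith
qed

end
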